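(* Under the hypotheses and notation of the context, for every $p\in(0,1)$ the family $\alpha(p;b,s,s')=\tilde\alpha(p;b,s,s')$ ($b\in\Lambda$, $s,s'\in S$) is the unique family of nonnegative real numbers $(a(b,s,s'))_{b\in\Lambda,\,s,s'\in S}$ satisfying $\sum_{s'\in S}a(b,s,s')=1$ for all $b,s$, and, for all $b,s,s'$, $$a(b,s,s')=\sum_{x\in\{0,1\}}\pi_x\,Q_x(b,s,s'),$$ where $\pi_1=p$, $\pi_0=1-p$, and, writing $\rho(s,x,b)=c_1\cdots c_r$ and $t=\sigma(s,x,b)$: if $r=0$ then $Q_x(b,s,s')=\mathbf 1\{t=s'\}$, and if $r>0$ then $Q_x(b,s,s')=\sum\prod_{i=1}^r a(c_i,t_i,t_{i+1})$, the sum running over all $(t_1,\dots,t_{r+1})\in S^{r+1}$ with $t_1=t$ and $t_{r+1}=s'$.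
   Context: A (deterministic) pushdown automaton over input alphabet $\{0,1\}$ consists of a finite state set $S$, a finite stack alphabet $\Lambda$, and a transition map assigning to each $(s,x,b)\in S\times\{0,1\}\times\Lambda$ a new state $\sigma(s,x,b)\in S$ and a word $\rho(s,x,b)\in\Lambda^*$. At each step it reads one input bit $x$ (input bits are i.i.d., equal to $1$ with probability $p$); in state $s$ with stack $bu$ ($b$ the top, i.e. leftmost, symbol) it moves to state $\sigma(s,x,b)$ with stack $\rho(s,x,b)u$; when the stack is empty it stops. Standing assumption: for every $b\in\Lambda$, $s\in S$, $w\in\Lambda^*$ and $p\in(0,1)$, started in state $s$ with stack $bw$, almost surely the stack content eventually equals $w$. For $u\in\Lambda^*$, $\tilde\alpha(p;u,s,s')$ denotes the probability that, started in state $s$ with stack $uw$, at the first time the stack content equals $w$ the automaton is in state $s'$ (independent of $w$). *)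

theory Defs
  imports "HOL-Probability.Probability"
begin

text \<open>Input bits are modelled as booleans: True = 1, False = 0.
  A (deterministic) pushdown automaton is given by
  trans_st :: "'s \<Rightarrow> bool \<Rightarrow> 'b \<Rightarrow> 's and rho :: 's \<Rightarrow> bool \<Rightarrow> 'b \<Rightarrow> 'b list.
  Configurations are pairs (state, stack), the head of the list being the top.\<close>

fun pda_step ::
  "('s \<Rightarrow> bool \<Rightarrow> 'b \<Rightarrow> 's) \<Rightarrow> ('s \<Rightarrow> bool \<Rightarrow> 'b \<Rightarrow> 'b list) \<Rightarrow> 's \<times> 'b list \<Rightarrow> bool \<Rightarrow> 's \<times> 'b list"
where
  "pda_step trans_st rho (s, []) x = (s, [])"
| "pda_step trans_st rho (s, b # u) x = (trans_st s x b, rho s x b @ u)"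

fun pda_run ::
  "('s \<Rightarrow> bool \<Rightarrow> 'b \<Rightarrow> 's) \<Rightarrow> ('s \<Rightarrow> bool \<Rightarrow> 'b \<Rightarrow> 'b list) \<Rightarrow> 's \<times> 'b list \<Rightarrow> bool stream \<Rightarrow> nat \<Rightarrow> 's \<times> 'b list"
where
  "pda_run trans_st rho c \<omega> 0 = c"
| "pda_run trans_st rho c \<omega> (Suc n) = pda_step trans_st rho (pda_run trans_st rho c \<omega> n) (\<omega> !! n)"

definition input_space :: "real \<Rightarrow> bool stream measure" where
  "input_space p = stream_space (measure_pmf (bernoulli_pmf p))"

text \<open>alpha-tilde(p; u, s, s'): probability that, started in state s with stack u
  (i.e. u w with w = [], the quantity being independent of w), at the first time the
  stack content equals w = [] the automaton is in state s'.\<close>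
definition alpha_tilde ::
  "('s \<Rightarrow> bool \<Rightarrow> 'b \<Rightarrow> 's) \<Rightarrow> ('s \<Rightarrow> bool \<Rightarrow> 'b \<Rightarrow> 'b list) \<Rightarrow> real \<Rightarrow> 'b list \<Rightarrow> 's \<Rightarrow> 's \<Rightarrow> real"
where
  "alpha_tilde trans_st rho p u s s' =
     measure (input_space p)
       {\<omega> \<in> space (input_space p). \<exists>n. snd (pda_run trans_st rho (s, u) \<omega> n) = []
            \<and> (\<forall>m<n. snd (pda_run trans_st rho (s, u) \<omega> m) \<noteq> [])
            \<and> fst (pda_run trans_st rho (s, u) \<omega> n) = s'}"

definition pda_standing_assumption ::
  "('s \<Rightarrow> bool \<Rightarrow> 'b \<Rightarrow> 's) \<Rightarrow> ('s \<Rightarrow> bool \<Rightarrow> 'b \<Rightarrow> 'b list) \<Rightarrow> bool"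
where
  "pda_standing_assumption trans_st rho \<longleftrightarrow>
     (\<forall>b s w p. 0 < p \<and> p < 1 \<longrightarrow>
        (AE \<omega> in input_space p. \<exists>n. snd (pda_run trans_st rho (s, b # w) \<omega> n) = w))"

text \<open>chain a cs t s' = sum over (t_1,...,t_{r+1}) in S^{r+1} with t_1 = t, t_{r+1} = s'
  of prod_{i=1}^r a(c_i, t_i, t_{i+1}), where cs = c_1...c_r; for r = 0 this is the
  indicator of t = s'.\<close>
fun chain :: "('b \<Rightarrow> 's::finite \<Rightarrow> 's \<Rightarrow> real) \<Rightarrow> 'b list \<Rightarrow> 's \<Rightarrow> 's \<Rightarrow> real" where
  "chain a [] t s' = (if t = s' then 1 else 0)"
| "chain a (c # cs) t s' = (\<Sum>t2\<in>UNIV. a c t t2 * chain a cs t2 s')"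

definition Qx ::
  "('s::finite \<Rightarrow> bool \<Rightarrow> 'b \<Rightarrow> 's) \<Rightarrow> ('s \<Rightarrow> bool \<Rightarrow> 'b \<Rightarrow> 'b list) \<Rightarrow> ('b \<Rightarrow> 's \<Rightarrow> 's \<Rightarrow> real)
     \<Rightarrow> bool \<Rightarrow> 'b \<Rightarrow> 's \<Rightarrow> 's \<Rightarrow> real"
where
  "Qx trans_st rho a x b s s' = chain a (rho s x b) (trans_st s x b) s'"

definition bit_prob :: "real \<Rightarrow> bool \<Rightarrow> real" where
  "bit_prob p x = (if x then p else 1 - p)"

definition solves_system ::
  "('s::finite \<Rightarrow> bool \<Rightarrow> 'b \<Rightarrow> 's) \<Rightarrow> ('s \<Rightarrow> bool \<Rightarrow> 'b \<Rightarrow> 'b list) \<Rightarrow> real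
     \<Rightarrow> ('b \<Rightarrow> 's \<Rightarrow> 's \<Rightarrow> real) \<Rightarrow> bool"
where
  "solves_system trans_st rho p a \<longleftrightarrow>
     (\<forall>b s s'. 0 \<le> a b s s') \<and>
     (\<forall>b s. (\<Sum>s'\<in>UNIV. a b s s') = 1) \<and>
     (\<forall>b s s'. a b s s' = (\<Sum>x\<in>UNIV. bit_prob p x * Qx trans_st rho a x b s s'))"

end

theory Submission
  imports Defs "HOL-Analysis.Analysis"
begin

lemma run_Suc_shift:
  "pda_run T R c \<omega> (Suc n) = pda_run T R (pda_step T R c (shd \<omega>)) (stl \<omega>) n"
  by (induction n) auto

lemma run_meas:
  "(\<lambda>\<omega>. pda_run T R c \<omega> n) \<in> measurable (stream_space (measure_pmf q)) (count_space UNIV)"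
proof (induction n arbitrary: c)
  case 0
  then show ?case by simp
next
  case (Suc n)
  have eq: "(\<lambda>\<omega>. pda_run T R c \<omega> (Suc n)) = (\<lambda>\<omega>. if shd \<omega> then pda_run T R (pda_step T R c True) (stl \<omega>) n
      else pda_run T R (pda_step T R c False) (stl \<omega>) n)"
    by (auto simp del: pda_run.simps(2) simp: run_Suc_shift)
  have m1: "(\<lambda>\<omega>. pda_run T R (pda_step T R c x) (stl \<omega>) n) \<in> measurable (stream_space (measure_pmf q)) (count_space UNIV)" for x
    using measurable_compose[OF measurable_stl Suc[of "pda_step T R c x"]] .
  have m2: "{\<omega> \<in> space (stream_space (measure_pmf q)). shd \<omega>} \<in> sets (stream_space (measure_pmf q))"
  proof -
    have "shd \<in> measurable (stream_space (measure_pmf q)) (count_space UNIV)"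
      using measurable_shd[of "measure_pmf q"] by simp
    then show ?thesis using measurable_sets[of shd _ "count_space UNIV" "{True}"] by (simp add: vimage_def Int_def)
  qed
  show ?case unfolding eq by (rule measurable_If[OF m1 m1 m2])
qed

lemma harmonic_int:
  fixes h :: "'s \<times> 'b list \<Rightarrow> real"
  assumes h: "\<And>c. h c = p * h (pda_step T R c True) + (1 - p) * h (pda_step T R c False)"
    and hpos: "\<And>c. 0 \<le> h c" and p: "0 \<le> p" "p \<le> 1"
  shows "(\<integral>\<^sup>+\<omega>. ennreal (h (pda_run T R c \<omega> n)) \<partial>input_space p) = ennreal (h c)"
proof -
  interpret S: prob_space "input_space p" unfolding input_space_def by (rule prob_space.prob_space_stream_space[OF prob_space_measure_pmf])
  show ?thesis
proof (induction n arbitrary: c)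
  case 0
  then show ?case by (simp add: S.emeasure_space_1)
next
  case (Suc n)
  have meas: "(\<lambda>\<omega>. ennreal (h (pda_run T R c \<omega> (Suc n)))) \<in> borel_measurable (stream_space (measure_pmf (bernoulli_pmf p)))"
    using measurable_compose[OF run_meas[of T R c "Suc n" "bernoulli_pmf p"], of "\<lambda>x. ennreal (h x)" borel] by simp
  have "(\<integral>\<^sup>+\<omega>. ennreal (h (pda_run T R c \<omega> (Suc n))) \<partial>input_space p)
     = (\<integral>\<^sup>+x. (\<integral>\<^sup>+X. ennreal (h (pda_run T R c (x ## X) (Suc n))) \<partial>input_space p) \<partial>measure_pmf (bernoulli_pmf p))"
    unfolding input_space_def by (rule prob_space.nn_integral_stream_space[OF prob_space_measure_pmf meas])
  also have "\<dots> = (\<integral>\<^sup>+x. ennreal (h (pda_step T R c x)) \<partial>measure_pmf (bernoulli_pmf p))"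
    by (simp del: pda_run.simps(2) add: run_Suc_shift Suc)
  also have "\<dots> = ennreal (h c)"
    using p hpos by (simp add: nn_integral_measure_pmf nn_integral_count_space_finite UNIV_bool
        ennreal_mult[symmetric] ennreal_plus[symmetric] h[of c] mult.commute del: ennreal_plus)
  finally show ?case .
qed
qed


lemma chain_nonneg: "(\<And>b s s'. 0 \<le> a b s s') \<Longrightarrow> 0 \<le> chain a cs t s'"
  by (induction cs arbitrary: t) (auto intro!: sum_nonneg mult_nonneg_nonneg)

lemma chain_sum1:
  assumes "\<And>b s. (\<Sum>s'\<in>UNIV. a b s s') = 1"
  shows "(\<Sum>s'\<in>UNIV. chain a cs t s') = 1"
proof (induction cs arbitrary: t)
  case Nil
  then show ?case by simp
next
  case (Cons c cs)
  have "(\<Sum>s'\<in>UNIV. chain a (c # cs) t s') = (\<Sum>s'\<in>UNIV. \<Sum>t2\<in>UNIV. a c t t2 * chain a cs t2 s')"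
    by simp
  also have "\<dots> = (\<Sum>t2\<in>UNIV. \<Sum>s'\<in>UNIV. a c t t2 * chain a cs t2 s')"
    by (rule sum.swap)
  also have "\<dots> = (\<Sum>t2\<in>UNIV. a c t t2 * (\<Sum>s'\<in>UNIV. chain a cs t2 s'))"
    by (simp add: sum_distrib_left)
  also have "\<dots> = 1" using Cons assms by simp
  finally show ?case .
qed

lemma chain_le1:
  assumes "\<And>b s s'. 0 \<le> a b s s'" "\<And>b s. (\<Sum>s'\<in>UNIV. a b s s') = 1"
  shows "chain a cs t s' \<le> 1"
proof -
  have "chain a cs t s' \<le> (\<Sum>s'\<in>UNIV. chain a cs t s')"
    by (rule member_le_sum) (auto intro: chain_nonneg assms)
  moreover have "(\<Sum>s'\<in>UNIV. chain a cs t s') = 1" by (rule chain_sum1) (rule assms(2))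
  ultimately show ?thesis by simp
qed

lemma chain_append:
  "chain a (u @ w) t s' = (\<Sum>m\<in>UNIV. chain a u t m * chain a w m s')"
proof (induction u arbitrary: t)
  case Nil
  have "(\<Sum>m\<in>UNIV. chain a [] t m * chain a w m s') = (\<Sum>m\<in>UNIV. if t = m then chain a w m s' else 0)"
    by (rule sum.cong) auto
  then show ?case by simp
next
  case (Cons c u)
  have "chain a ((c # u) @ w) t s' = (\<Sum>t2\<in>UNIV. \<Sum>m\<in>UNIV. a c t t2 * (chain a u t2 m * chain a w m s'))"
    using Cons by (simp add: sum_distrib_left)
  also have "\<dots> = (\<Sum>m\<in>UNIV. \<Sum>t2\<in>UNIV. a c t t2 * (chain a u t2 m * chain a w m s'))"
    by (rule sum.swap)
  also have "\<dots> = (\<Sum>m\<in>UNIV. chain a (c # u) t m * chain a w m s')"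
    by (simp add: sum_distrib_right mult.assoc)
  finally show ?case .
qed

lemma sum_bool: "(\<Sum>x\<in>UNIV. f x) = f True + f (False::bool)"
  by (simp add: UNIV_bool add.commute)

lemma harmonic_chain:
  assumes sol: "solves_system T R p a"
  shows "chain a (snd c) (fst c) s' = p * chain a (snd (pda_step T R c True)) (fst (pda_step T R c True)) s'
     + (1 - p) * chain a (snd (pda_step T R c False)) (fst (pda_step T R c False)) s'"
proof (cases c)
  case (Pair s u)
  show ?thesis
  proof (cases u)
    case Nil
    then show ?thesis using Pair by (simp add: algebra_simps)
  next
    case (Cons b w)
    have eq: "a b s t2 = p * chain a (R s True b) (T s True b) t2 + (1 - p) * chain a (R s False b) (T s False b) t2" for t2
      using sol unfolding solves_system_def Qx_def bit_prob_def by (simp add: sum_bool)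
    have "chain a (snd c) (fst c) s' = (\<Sum>t2\<in>UNIV. a b s t2 * chain a w t2 s')"
      using Pair Cons by simp
    also have "\<dots> = (\<Sum>t2\<in>UNIV. p * (chain a (R s True b) (T s True b) t2 * chain a w t2 s')
        + (1 - p) * (chain a (R s False b) (T s False b) t2 * chain a w t2 s'))"
      by (rule sum.cong) (auto simp: eq ring_distribs)
    also have "\<dots> = p * (\<Sum>t2\<in>UNIV. chain a (R s True b) (T s True b) t2 * chain a w t2 s')
        + (1 - p) * (\<Sum>t2\<in>UNIV. chain a (R s False b) (T s False b) t2 * chain a w t2 s')"
      by (simp add: sum.distrib sum_distrib_left)
    finally show ?thesis using Pair Cons by (simp add: chain_append)
  qed
qed


lemma run_stays:
  assumes "snd (pda_run T R c \<omega> k) = []"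
  shows "pda_run T R c \<omega> (k + j) = pda_run T R c \<omega> k"
proof (induction j)
  case 0
  then show ?case by simp
next
  case (Suc j)
  obtain t where t: "pda_run T R c \<omega> k = (t, [])" using assms by (cases "pda_run T R c \<omega> k") auto
  show ?case using Suc t by simp
qed

lemma sol_eq_alpha:
  fixes T :: "'s::finite \<Rightarrow> bool \<Rightarrow> 'b \<Rightarrow> 's"
  assumes SA: "pda_standing_assumption T R" and p: "0 < p" "p < 1" and sol: "solves_system T R p a"
  shows "a b s s' = alpha_tilde T R p [b] s s'"
proof -
  interpret S: prob_space "input_space p" unfolding input_space_def
    by (rule prob_space.prob_space_stream_space[OF prob_space_measure_pmf])
  have nn: "\<And>b s s'. 0 \<le> a b s s'" and st: "\<And>b s. (\<Sum>s'\<in>UNIV. a b s s') = 1"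
    using sol unfolding solves_system_def by auto
  define A where "A c = chain a (snd c) (fst c) s'" for c
  define c0 where "c0 = (s, [b])"
  define X where "X n \<omega> = pda_run T R c0 \<omega> n" for n \<omega>
  have Apos: "0 \<le> A c" for c unfolding A_def by (rule chain_nonneg[OF nn])
  have Ale: "A c \<le> 1" for c unfolding A_def by (rule chain_le1[OF nn st])
  have harm: "A c = p * A (pda_step T R c True) + (1-p) * A (pda_step T R c False)" for c
    unfolding A_def by (rule harmonic_chain[OF sol])
  have Ac0: "A c0 = a b s s'"
  proof -
    have "A c0 = (\<Sum>t2\<in>UNIV. a b s t2 * (if t2 = s' then 1 else 0))"
      unfolding A_def c0_def by simp
    also have "\<dots> = (\<Sum>t2\<in>UNIV. if t2 = s' then a b s t2 else 0)"
      by (rule sum.cong) auto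
    finally show ?thesis by simp
  qed
  have int: "(\<integral>\<^sup>+\<omega>. ennreal (A (X n \<omega>)) \<partial>input_space p) = ennreal (a b s s')" for n
    unfolding X_def using harmonic_int[of A p T R, OF harm Apos] p Ac0 by simp
  have measX: "X n \<in> measurable (input_space p) (count_space UNIV)" for n
    unfolding X_def[abs_def] input_space_def by (rule run_meas)
  define E where "E n = {\<omega> \<in> space (input_space p). X n \<omega> = (s', [])}" for n
  define N where "N n = {\<omega> \<in> space (input_space p). snd (X n \<omega>) \<noteq> []}" for n
  have Esets: "E n \<in> sets (input_space p)" for n
  proof -
    have "E n = X n -` {(s', [])} \<inter> space (input_space p)" by (auto simp: E_def)
    then show ?thesis using measurable_sets[OF measX, of "{(s',[])}"] by simp
  qed
  have Nsets: "N n \<in> sets (input_space p)" for n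
  proof -
    have "N n = X n -` {c. snd c \<noteq> []} \<inter> space (input_space p)" by (auto simp: N_def)
    then show ?thesis using measurable_sets[OF measX, of "{c. snd c \<noteq> []}"] by simp
  qed
  have ptw: "indicator (E n) \<omega> \<le> ennreal (A (X n \<omega>)) \<and>
      ennreal (A (X n \<omega>)) \<le> indicator (E n) \<omega> + indicator (N n) \<omega>"
    if "\<omega> \<in> space (input_space p)" for n \<omega>
  proof (cases "X n \<omega>")
    case (Pair t u)
    show ?thesis
    proof (cases u)
      case Nil
      then show ?thesis using Pair that by (auto simp: E_def N_def A_def indicator_def)
    next
      case (Cons x xs)
      then show ?thesis using Pair that Apos[of "X n \<omega>"] Ale[of "X n \<omega>"]
        by (auto simp: E_def N_def indicator_def)
    qed
  qed
  have le1: "measure (input_space p) (E n) \<le> a b s s'" for n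
  proof -
    have "emeasure (input_space p) (E n) = (\<integral>\<^sup>+\<omega>. indicator (E n) \<omega> \<partial>input_space p)"
      using Esets by simp
    also have "\<dots> \<le> (\<integral>\<^sup>+\<omega>. ennreal (A (X n \<omega>)) \<partial>input_space p)"
      by (rule nn_integral_mono) (use ptw in blast)
    finally show ?thesis using int nn[of b s s'] by (simp add: S.emeasure_eq_measure)
  qed
  have le2: "a b s s' \<le> measure (input_space p) (E n) + measure (input_space p) (N n)" for n
  proof -
    have "ennreal (a b s s') = (\<integral>\<^sup>+\<omega>. ennreal (A (X n \<omega>)) \<partial>input_space p)" using int by simp
    also have "\<dots> \<le> (\<integral>\<^sup>+\<omega>. indicator (E n) \<omega> + indicator (N n) \<omega> \<partial>input_space p)"
      by (rule nn_integral_mono) (use ptw in blast)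
    also have "\<dots> = emeasure (input_space p) (E n) + emeasure (input_space p) (N n)"
      using Esets Nsets by (simp add: nn_integral_add)
    finally show ?thesis
      by (simp add: S.emeasure_eq_measure ennreal_plus[symmetric] del: ennreal_plus)
  qed
  have incE: "incseq E"
  proof (rule incseq_SucI)
    fix n show "E n \<subseteq> E (Suc n)" by (auto simp: E_def X_def)
  qed
  have decN: "decseq N"
  proof (rule decseq_SucI)
    fix n show "N (Suc n) \<subseteq> N n"
    proof
      fix \<omega> assume w: "\<omega> \<in> N (Suc n)"
      show "\<omega> \<in> N n"
      proof (rule ccontr)
        assume "\<omega> \<notin> N n"
        then have "snd (X n \<omega>) = []" using w by (auto simp: N_def)
        then obtain t where "X n \<omega> = (t, [])" by (cases "X n \<omega>") auto
        then show False using w by (auto simp: N_def X_def)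
      qed
    qed
  qed
  have lim1: "(\<lambda>n. measure (input_space p) (E n)) \<longlonglongrightarrow> measure (input_space p) (\<Union>n. E n)"
    by (rule S.finite_Lim_measure_incseq) (use Esets incE in auto)
  have lim2: "(\<lambda>n. measure (input_space p) (N n)) \<longlonglongrightarrow> measure (input_space p) (\<Inter>n. N n)"
    by (rule S.finite_Lim_measure_decseq) (use Nsets decN in auto)
  have AEe: "AE \<omega> in input_space p. \<exists>n. snd (X n \<omega>) = []"
    using SA p unfolding pda_standing_assumption_def X_def c0_def by auto
  have Nsets': "(\<Inter>n. N n) \<in> sets (input_space p)" using Nsets by auto
  have "emeasure (input_space p) (\<Inter>n. N n) = 0"
    using AEe AE_iff_measurable[OF Nsets', of "\<lambda>\<omega>. \<exists>n. snd (X n \<omega>) = []"]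
    by (auto simp: N_def)
  then have N0: "measure (input_space p) (\<Inter>n. N n) = 0" by (simp add: S.emeasure_eq_measure)
  have seteq: "{\<omega> \<in> space (input_space p). \<exists>n. snd (pda_run T R (s, [b]) \<omega> n) = []
            \<and> (\<forall>m<n. snd (pda_run T R (s, [b]) \<omega> m) \<noteq> [])
            \<and> fst (pda_run T R (s, [b]) \<omega> n) = s'} = (\<Union>n. E n)"
  proof
    show "{\<omega> \<in> space (input_space p). \<exists>n. snd (pda_run T R (s, [b]) \<omega> n) = []
            \<and> (\<forall>m<n. snd (pda_run T R (s, [b]) \<omega> m) \<noteq> [])
            \<and> fst (pda_run T R (s, [b]) \<omega> n) = s'} \<subseteq> (\<Union>n. E n)"
    proof
      fix \<omega> assume "\<omega> \<in> {\<omega> \<in> space (input_space p). \<exists>n. snd (pda_run T R (s, [b]) \<omega> n) = []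
            \<and> (\<forall>m<n. snd (pda_run T R (s, [b]) \<omega> m) \<noteq> [])
            \<and> fst (pda_run T R (s, [b]) \<omega> n) = s'}"
      then obtain n where "\<omega> \<in> space (input_space p)" "snd (X n \<omega>) = []" "fst (X n \<omega>) = s'"
        by (auto simp: X_def c0_def)
      then have "\<omega> \<in> E n" unfolding E_def by (metis (mono_tags) mem_Collect_eq prod.collapse)
      then show "\<omega> \<in> (\<Union>n. E n)" by blast
    qed
  next
    show "(\<Union>n. E n) \<subseteq> {\<omega> \<in> space (input_space p). \<exists>n. snd (pda_run T R (s, [b]) \<omega> n) = []
            \<and> (\<forall>m<n. snd (pda_run T R (s, [b]) \<omega> m) \<noteq> [])
            \<and> fst (pda_run T R (s, [b]) \<omega> n) = s'}"
    proof
      fix \<omega> assume "\<omega> \<in> (\<Union>n. E n)"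
      then obtain n where w: "\<omega> \<in> space (input_space p)" "X n \<omega> = (s', [])" by (auto simp: E_def)
      define k where "k = (LEAST k. snd (X k \<omega>) = [])"
      have k1: "snd (X k \<omega>) = []" unfolding k_def by (rule LeastI[of _ n]) (simp add: w)
      have kn: "k \<le> n" unfolding k_def by (rule Least_le) (simp add: w)
      have k2: "\<forall>m<k. snd (X m \<omega>) \<noteq> []" unfolding k_def using not_less_Least by blast
      have "X (k + (n - k)) \<omega> = X k \<omega>" unfolding X_def by (rule run_stays) (use k1 X_def in simp)
      then have "X k \<omega> = (s', [])" using kn w by simp
      then show "\<omega> \<in> {\<omega> \<in> space (input_space p). \<exists>n. snd (pda_run T R (s, [b]) \<omega> n) = []
            \<and> (\<forall>m<n. snd (pda_run T R (s, [b]) \<omega> m) \<noteq> [])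
            \<and> fst (pda_run T R (s, [b]) \<omega> n) = s'}"
        using w k2 by (auto simp: X_def c0_def intro!: exI[of _ k])
    qed
  qed
  have alpha: "alpha_tilde T R p [b] s s' = measure (input_space p) (\<Union>n. E n)"
    unfolding alpha_tilde_def seteq ..
  have "alpha_tilde T R p [b] s s' \<le> a b s s'"
    unfolding alpha by (rule LIMSEQ_le_const2[OF lim1]) (use le1 in auto)
  moreover have "a b s s' \<le> alpha_tilde T R p [b] s s'"
  proof -
    have "(\<lambda>n. measure (input_space p) (E n) + measure (input_space p) (N n)) \<longlonglongrightarrow>
        measure (input_space p) (\<Union>n. E n)"
      using tendsto_add[OF lim1 lim2] N0 by simp
    then show ?thesis unfolding alpha by (rule LIMSEQ_le_const) (use le2 in auto)
  qed
  ultimately show ?thesis by simp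
qed


definition fam :: "real ^ ('b::finite \<times> 's::finite \<times> 's) \<Rightarrow> 'b \<Rightarrow> 's \<Rightarrow> 's \<Rightarrow> real" where
  "fam v = (\<lambda>b s s'. v $ (b, s, s'))"

lemma chain_cont: "continuous_on S (\<lambda>v. chain (fam v) cs t s')"
proof (induction cs arbitrary: t)
  case Nil
  then show ?case by simp
next
  case (Cons c cs)
  have "continuous_on S (\<lambda>v. fam v c t t2)" for t2
    unfolding fam_def by (intro continuous_on_component continuous_on_id)
  then show ?case unfolding chain.simps by (intro continuous_on_sum continuous_on_mult Cons.IH)
qed


definition Kset :: "(real ^ ('b::finite \<times> 's::finite \<times> 's)) set" where
  "Kset = {v. (\<forall>i. 0 \<le> v $ i) \<and> (\<forall>b s. (\<Sum>s'\<in>UNIV. v $ (b, s, s')) = 1)}"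

definition Fmap :: "('s::finite \<Rightarrow> bool \<Rightarrow> 'b::finite \<Rightarrow> 's) \<Rightarrow> ('s \<Rightarrow> bool \<Rightarrow> 'b \<Rightarrow> 'b list) \<Rightarrow> real
    \<Rightarrow> real ^ ('b::finite \<times> 's::finite \<times> 's) \<Rightarrow> real ^ ('b::finite \<times> 's::finite \<times> 's)" where
  "Fmap T R p v = (\<chi> i. \<Sum>x\<in>UNIV. bit_prob p x * Qx T R (fam v) x (fst i) (fst (snd i)) (snd (snd i)))"

lemma Fmap_nth: "Fmap T R p v $ (b, s, s') = (\<Sum>x\<in>UNIV. bit_prob p x * Qx T R (fam v) x b s s')"
  unfolding Fmap_def by simp

lemma Kset_nonneg: "v \<in> Kset \<Longrightarrow> 0 \<le> v $ i"
  unfolding Kset_def by blast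

lemma Kset_sum: "v \<in> Kset \<Longrightarrow> (\<Sum>s'\<in>UNIV. v $ (b, s, s')) = 1"
  unfolding Kset_def by blast

lemma KsetI: "(\<And>i. 0 \<le> v $ i) \<Longrightarrow> (\<And>b s. (\<Sum>s'\<in>UNIV. v $ (b, s, s')) = 1) \<Longrightarrow> v \<in> Kset"
  unfolding Kset_def by blast

lemma Kset_le1: "v \<in> Kset \<Longrightarrow> v $ i \<le> 1"
proof -
  assume v: "v \<in> Kset"
  obtain b s s' where i: "i = (b, s, s')" by (cases i) auto
  have "v $ (b, s, s') \<le> (\<Sum>s''\<in>UNIV. v $ (b, s, s''))"
    by (rule member_le_sum) (auto intro: Kset_nonneg[OF v])
  then show ?thesis using Kset_sum[OF v] i by simp
qed

lemma closed_Kset: "closed (Kset :: (real ^ ('b::finite \<times> 's::finite \<times> 's)) set)"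
proof -
  have c1: "closed {v :: real ^ ('b::finite \<times> 's::finite \<times> 's). \<forall>i. 0 \<le> v $ i}"
    by (rule closed_positive_orthant)
  have c2: "closed {v :: real ^ ('b::finite \<times> 's::finite \<times> 's). (\<Sum>s'\<in>UNIV. v $ (b, s, s')) = 1}" for b s
  proof (rule closed_Collect_eq)
    show "continuous_on UNIV (\<lambda>v :: real ^ ('b::finite \<times> 's::finite \<times> 's). \<Sum>s'\<in>UNIV. v $ (b, s, s'))"
      by (rule continuous_on_sum) (rule continuous_on_component[OF continuous_on_id])
  qed (rule continuous_on_const)
  have "(Kset :: (real ^ ('b::finite \<times> 's::finite \<times> 's)) set) = {v. \<forall>i. 0 \<le> v $ i} \<inter> (\<Inter>b. \<Inter>s. {v. (\<Sum>s'\<in>UNIV. v $ (b, s, s')) = 1})"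
    unfolding Kset_def by blast
  moreover have "closed ({v :: real ^ ('b::finite \<times> 's::finite \<times> 's). \<forall>i. 0 \<le> v $ i} \<inter> (\<Inter>b. \<Inter>s. {v. (\<Sum>s'\<in>UNIV. v $ (b, s, s')) = 1}))"
    by (intro closed_Int closed_INT c1 c2 ballI)
  ultimately show ?thesis by simp
qed

lemma bounded_Kset: "bounded (Kset :: (real ^ ('b::finite \<times> 's::finite \<times> 's)) set)"
proof (rule bounded_subset[OF bounded_cbox])
  show "Kset \<subseteq> cbox 0 (\<chi> i. 1)"
  proof
    fix v assume v: "v \<in> Kset"
    show "v \<in> cbox 0 (\<chi> i. 1)" unfolding mem_box_cart
      using Kset_nonneg[OF v] Kset_le1[OF v] by simp
  qed
qed

lemma convex_Kset: "convex (Kset :: (real ^ ('b::finite \<times> 's::finite \<times> 's)) set)"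
  unfolding convex_def
proof (intro ballI allI impI)
  fix x y :: "real ^ ('b::finite \<times> 's::finite \<times> 's)" and u v :: real
  assume x: "x \<in> Kset" and y: "y \<in> Kset" and uv: "0 \<le> u" "0 \<le> v" "u + v = 1"
  show "u *\<^sub>R x + v *\<^sub>R y \<in> Kset"
  proof (rule KsetI)
    fix i
    have "0 \<le> x $ i" "0 \<le> y $ i" using Kset_nonneg x y by blast+
    then show "0 \<le> (u *\<^sub>R x + v *\<^sub>R y) $ i" using uv by simp
  next
    fix b s
    have "(\<Sum>s'\<in>UNIV. (u *\<^sub>R x + v *\<^sub>R y) $ (b, s, s'))
        = u * (\<Sum>s'\<in>UNIV. x $ (b, s, s')) + v * (\<Sum>s'\<in>UNIV. y $ (b, s, s'))"
      by (simp add: sum.distrib sum_distrib_left)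
    then show "(\<Sum>s'\<in>UNIV. (u *\<^sub>R x + v *\<^sub>R y) $ (b, s, s')) = 1"
      using Kset_sum[OF x] Kset_sum[OF y] uv by simp
  qed
qed

lemma Kset_ne: "(Kset :: (real ^ ('b::finite \<times> 's::finite \<times> 's)) set) \<noteq> {}"
proof -
  define v0 :: "real ^ ('b::finite \<times> 's::finite \<times> 's)" where "v0 = (\<chi> i. if snd (snd i) = fst (snd i) then 1 else 0)"
  have "v0 \<in> Kset"
  proof (rule KsetI)
    fix i show "0 \<le> v0 $ i" unfolding v0_def by simp
  next
    fix b s show "(\<Sum>s'\<in>UNIV. v0 $ (b, s, s')) = 1" unfolding v0_def by simp
  qed
  then show ?thesis by blast
qed

lemma cont_Fmap: "continuous_on S (Fmap T R p)"
  unfolding Fmap_def Qx_def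
  by (intro continuous_on_vec_lambda continuous_on_sum continuous_on_mult continuous_on_const chain_cont)


lemma Fmap_Kset:
  fixes T :: "'s::finite \<Rightarrow> bool \<Rightarrow> 'b::finite \<Rightarrow> 's"
  assumes p: "0 \<le> p" "p \<le> 1" and v: "v \<in> Kset"
  shows "Fmap T R p v \<in> Kset"
proof -
  have nn: "\<And>b s s'. 0 \<le> fam v b s s'" unfolding fam_def by (rule Kset_nonneg[OF v])
  have st: "\<And>b s. (\<Sum>s'\<in>UNIV. fam v b s s') = 1" unfolding fam_def by (rule Kset_sum[OF v])
  show ?thesis
  proof (rule KsetI)
    fix i :: "'b \<times> 's \<times> 's"
    obtain b s s' where i: "i = (b, s, s')" by (cases i) auto
    have "0 \<le> bit_prob p x" for x using p unfolding bit_prob_def by simp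
    then show "0 \<le> Fmap T R p v $ i" unfolding i Fmap_nth Qx_def
      by (intro sum_nonneg mult_nonneg_nonneg chain_nonneg[OF nn])
  next
    fix b s
    have "(\<Sum>s'\<in>UNIV. Fmap T R p v $ (b, s, s')) = (\<Sum>s'\<in>UNIV. \<Sum>x\<in>UNIV. bit_prob p x * Qx T R (fam v) x b s s')"
      by (simp only: Fmap_nth)
    also have "\<dots> = (\<Sum>x\<in>UNIV. \<Sum>s'\<in>UNIV. bit_prob p x * Qx T R (fam v) x b s s')"
      by (rule sum.swap)
    also have "\<dots> = (\<Sum>x\<in>UNIV. bit_prob p x * (\<Sum>s'\<in>UNIV. Qx T R (fam v) x b s s'))"
      by (simp add: sum_distrib_left)
    also have "\<dots> = (\<Sum>x\<in>UNIV. bit_prob p x)"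
      unfolding Qx_def by (simp add: chain_sum1[OF st])
    also have "\<dots> = 1" by (simp add: sum_bool bit_prob_def)
    finally show "(\<Sum>s'\<in>UNIV. Fmap T R p v $ (b, s, s')) = 1" .
  qed
qed

lemma exists_solution:
  fixes T :: "'s::finite \<Rightarrow> bool \<Rightarrow> 'b::finite \<Rightarrow> 's"
  assumes p: "0 \<le> p" "p \<le> 1"
  shows "\<exists>a. solves_system T R p a"
proof -
  have compactK: "compact (Kset :: (real ^ ('b::finite \<times> 's::finite \<times> 's)) set)"
    using closed_Kset bounded_Kset by (simp add: compact_eq_bounded_closed)
  have FK: "Fmap T R p \<in> Kset \<rightarrow> Kset" using Fmap_Kset[OF p] by blast
  obtain v where vK: "v \<in> Kset" and vfix: "Fmap T R p v = v"
    using brouwer[OF compactK convex_Kset Kset_ne cont_Fmap FK] by blast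
  have "solves_system T R p (fam v)"
    unfolding solves_system_def
  proof (intro conjI allI)
    fix b s s'
    show "0 \<le> fam v b s s'" unfolding fam_def by (rule Kset_nonneg[OF vK])
    have "fam v b s s' = Fmap T R p v $ (b, s, s')" using vfix by (simp add: fam_def)
    then show "fam v b s s' = (\<Sum>x\<in>UNIV. bit_prob p x * Qx T R (fam v) x b s s')"
      by (simp only: Fmap_nth)
  next
    fix b s
    show "(\<Sum>s'\<in>UNIV. fam v b s s') = 1" unfolding fam_def by (rule Kset_sum[OF vK])
  qed
  then show ?thesis by blast
qed

theorem claim3p2:
  fixes trans_st :: "'s::finite \<Rightarrow> bool \<Rightarrow> 'b::finite \<Rightarrow> 's"
    and rho :: "'s \<Rightarrow> bool \<Rightarrow> 'b \<Rightarrow> 'b list"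
  assumes "pda_standing_assumption trans_st rho"
    and "0 < p" and "p < 1"
  shows "solves_system trans_st rho p (\<lambda>b s s'. alpha_tilde trans_st rho p [b] s s')
       \<and> (\<forall>a. solves_system trans_st rho p a \<longrightarrow> a = (\<lambda>b s s'. alpha_tilde trans_st rho p [b] s s'))"
proof -
  have uniq: "\<forall>a. solves_system trans_st rho p a \<longrightarrow> a = (\<lambda>b s s'. alpha_tilde trans_st rho p [b] s s')"
    using sol_eq_alpha[OF assms] by blast
  obtain a where a: "solves_system trans_st rho p a"
    using exists_solution[of p trans_st rho] assms by auto
  then have "a = (\<lambda>b s s'. alpha_tilde trans_st rho p [b] s s')" using uniq by blast
  then show ?thesis using uniq a by simp
qed

end
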